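(* Let $\mathcal{C}\subseteq\mathbb{F}_q^n$ be a GQC code with orbit lengths $l_1,\dots,l_m$, and let $\mathcal{C}^\perp$ be its dual code. Let $\mathcal{G}=\{g_1,\dots,g_m\}$ be a Gröbner basis of $\overline{\mathcal{C}}$ and $\mathcal{H}=\{h_1,\dots,h_m\}$ a Gröbner basis of $\overline{\mathcal{C}^\perp}$, both with respect to an arbitrary monomial ordering on $\mathbb{F}_q[t]^m$, and regard their elements as elements of $M$ via $\pi$. Then for all $1\le i,j\le m$, $\langle g_i,h_j\rangle\equiv\langle h_j,g_i\rangle\equiv 0 \pmod{t^{l}-1}$, where $l$ is the modulus appearing in the definition of each respective scalar product.
   Context: Let $q$ be a prime power. A linear code $\mathcal{C}\subseteq\mathbb{F}_q^n$ is a generalized quasi-cyclic (GQC) code with orbit lengths $l_1,\dots,l_m$ ($m<n$, $l_1+\dots+l_m=n$) if, writing each codeword as $c=(c_1,\dots,c_m)$ with blocks $c_i=(c_{i,0},\dots,c_{i,l_i-1})$ of length $l_i$, $\mathcal{C}$ is closed under the simultaneous local cyclic shift $\sigma$ sending each block $c_i$ to $(c_{i,l_i-1},c_{i,0},\dots,c_{i,l_i-2})$. Identify $c$ with $(c_1(t),\dots,c_m(t))\in M:=\bigoplus_{i=1}^m\mathbb{F}_q[t]/(t^{l_i}-1)$, where $c_i(t)=\sum_{j=0}^{l_i-1}c_{i,j}t^j$; then $\sigma$ is multiplication by $t$ and $\mathcal{C}$ is an $\mathbb{F}_q[t]$-submodule of $M$. Elements of $\mathbb{F}_q[t]/(t^{l_i}-1)$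 are identified with their representatives of degree $<l_i$. Let $\pi:\mathbb{F}_q[t]^m\to M$ be the natural projection and $\overline{\mathcal{C}}:=\pi^{-1}(\mathcal{C})$, a submodule of $\mathbb{F}_q[t]^m$. The dual code $\mathcal{C}^\perp$ (with respect to the standard bilinear form on $\mathbb{F}_q^n$) is again GQC with the same orbit lengths, and $\overline{\mathcal{C}^\perp}:=\pi^{-1}(\mathcal{C}^\perp)$. For $a(t)=\sum_{j=0}^{l-1}a_jt^j\in\mathbb{F}_q[t]/(t^l-1)$ put $\widehat{a}(t):=a_0+a_{l-1}t+\dots+a_1t^{l-1}$. For $u=(u_1,\dots,u_m),v=(v_1,\dots,v_m)\in M$ define the scalar product $\langle u,v\rangle:=\sum_{i=1}^m u_i(t)\widehat{v}_i(t)\sum_{k=0}^{l/l_i-1}t^{kl_i}\bmod (t^l-1)$, where $\widehat{v}_i$ is computed in $\mathbb{F}_q[t]/(t^{l_i}-1)$ and $l$ is the least common multiple of those $l_i$ for which both $u_i$ and $v_i$ are nonzero. *)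

theory Defs
  imports "HOL-Computational_Algebra.Polynomial"
begin

text \<open>Elements of F_q[t]^m are modelled as functions u :: nat => 'a poly vanishing
  at indices >= m; elements of M = (+)_i F_q[t]/(t^{l_i}-1) as such functions whose
  i-th component has degree < l_i (canonical representatives). A codeword
  c = (c_1,...,c_m) of F_q^n is identified with its element of M: the coefficient
  of t^j in the i-th component is c_{i,j}.\<close>

definition orbit_lengths :: "nat \<Rightarrow> (nat \<Rightarrow> nat) \<Rightarrow> nat \<Rightarrow> bool" where
  "orbit_lengths m l n \<longleftrightarrow> m < n \<and> (\<forall>i<m. 0 < l i) \<and> (\<Sum>i<m. l i) = n"

definition M_space :: "nat \<Rightarrow> (nat \<Rightarrow> nat) \<Rightarrow> (nat \<Rightarrow> 'a::field poly) set" where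
  "M_space m l = {u. (\<forall>i<m. u i = 0 \<or> degree (u i) < l i) \<and> (\<forall>i\<ge>m. u i = 0)}"

definition free_mod :: "nat \<Rightarrow> (nat \<Rightarrow> 'a::field poly) set" where
  "free_mod m = {p. \<forall>i\<ge>m. p i = 0}"

definition tpm1 :: "nat \<Rightarrow> 'a::field poly" where
  "tpm1 k = monom 1 k - 1"

definition linear_code :: "nat \<Rightarrow> (nat \<Rightarrow> nat) \<Rightarrow> (nat \<Rightarrow> 'a::field poly) set \<Rightarrow> bool" where
  "linear_code m l C \<longleftrightarrow> C \<subseteq> M_space m l \<and> (\<lambda>_. 0) \<in> C \<and>
     (\<forall>u\<in>C. \<forall>v\<in>C. (\<lambda>i. u i + v i) \<in> C) \<and>
     (\<forall>a. \<forall>u\<in>C. (\<lambda>i. smult a (u i)) \<in> C)"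

definition loc_shift :: "nat \<Rightarrow> (nat \<Rightarrow> nat) \<Rightarrow> (nat \<Rightarrow> 'a::field poly) \<Rightarrow> (nat \<Rightarrow> 'a poly)" where
  "loc_shift m l u = (\<lambda>i. if i < m then (monom 1 1 * u i) mod tpm1 (l i) else 0)"

definition GQC :: "nat \<Rightarrow> (nat \<Rightarrow> nat) \<Rightarrow> nat \<Rightarrow> (nat \<Rightarrow> 'a::field poly) set \<Rightarrow> bool" where
  "GQC m l n C \<longleftrightarrow> orbit_lengths m l n \<and> linear_code m l C \<and> (\<forall>u\<in>C. loc_shift m l u \<in> C)"

definition std_bil :: "nat \<Rightarrow> (nat \<Rightarrow> nat) \<Rightarrow> (nat \<Rightarrow> 'a::field poly) \<Rightarrow> (nat \<Rightarrow> 'a poly) \<Rightarrow> 'a" where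
  "std_bil m l u v = (\<Sum>i<m. \<Sum>j<l i. coeff (u i) j * coeff (v i) j)"

definition dual_code :: "nat \<Rightarrow> (nat \<Rightarrow> nat) \<Rightarrow> (nat \<Rightarrow> 'a::field poly) set \<Rightarrow> (nat \<Rightarrow> 'a poly) set" where
  "dual_code m l C = {v \<in> M_space m l. \<forall>u\<in>C. std_bil m l u v = 0}"

definition proj :: "nat \<Rightarrow> (nat \<Rightarrow> nat) \<Rightarrow> (nat \<Rightarrow> 'a::field poly) \<Rightarrow> (nat \<Rightarrow> 'a poly)" where
  "proj m l p = (\<lambda>i. if i < m then p i mod tpm1 (l i) else 0)"

definition lift_code :: "nat \<Rightarrow> (nat \<Rightarrow> nat) \<Rightarrow> (nat \<Rightarrow> 'a::field poly) set \<Rightarrow> (nat \<Rightarrow> 'a poly) set" where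
  "lift_code m l C = {p \<in> free_mod m. proj m l p \<in> C}"

text \<open>Monomials of F_q[t]^m: t^k e_i is represented by the pair (k, i), i < m.\<close>
definition monomial_order :: "nat \<Rightarrow> (nat \<times> nat \<Rightarrow> nat \<times> nat \<Rightarrow> bool) \<Rightarrow> bool" where
  "monomial_order m mord \<longleftrightarrow>
     (\<forall>x. \<not> mord x x) \<and>
     (\<forall>x y z. mord x y \<longrightarrow> mord y z \<longrightarrow> mord x z) \<and>
     (\<forall>a i b j. i < m \<longrightarrow> j < m \<longrightarrow> (a, i) \<noteq> (b, j) \<longrightarrow> mord (a, i) (b, j) \<or> mord (b, j) (a, i)) \<and>
     (\<forall>a i c. i < m \<longrightarrow> 0 < c \<longrightarrow> mord (a, i) (a + c, i)) \<and>
     (\<forall>a i b j c. i < m \<longrightarrow> j < m \<longrightarrow> mord (a, i) (b, j) \<longrightarrow> mord (a + c, i) (b + c, j))"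

definition mon_supp :: "nat \<Rightarrow> (nat \<Rightarrow> 'a::field poly) \<Rightarrow> (nat \<times> nat) set" where
  "mon_supp m f = {(k, i). i < m \<and> coeff (f i) k \<noteq> 0}"

definition lead_mon :: "nat \<Rightarrow> (nat \<times> nat \<Rightarrow> nat \<times> nat \<Rightarrow> bool) \<Rightarrow> (nat \<Rightarrow> 'a::field poly) \<Rightarrow> nat \<times> nat" where
  "lead_mon m mord f = (THE x. x \<in> mon_supp m f \<and> (\<forall>y\<in>mon_supp m f. y \<noteq> x \<longrightarrow> mord y x))"

definition mon_dvd :: "nat \<times> nat \<Rightarrow> nat \<times> nat \<Rightarrow> bool" where
  "mon_dvd x y \<longleftrightarrow> snd x = snd y \<and> fst x \<le> fst y"

definition groebner_basis :: "nat \<Rightarrow> (nat \<times> nat \<Rightarrow> nat \<times> nat \<Rightarrow> bool) \<Rightarrow> (nat \<Rightarrow> 'a::field poly) set \<Rightarrow> (nat \<Rightarrow> 'a poly) set \<Rightarrow> bool" where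
  "groebner_basis m mord G N \<longleftrightarrow> G \<subseteq> N \<and> N \<subseteq> free_mod m \<and>
     (\<forall>f\<in>N. f \<noteq> (\<lambda>_. 0) \<longrightarrow> (\<exists>g\<in>G. g \<noteq> (\<lambda>_. 0) \<and> mon_dvd (lead_mon m mord g) (lead_mon m mord f)))"

definition hat :: "nat \<Rightarrow> 'a::field poly \<Rightarrow> 'a poly" where
  "hat L a = (\<Sum>j<L. monom (coeff a ((L - j) mod L)) j)"

definition scal :: "nat \<Rightarrow> (nat \<Rightarrow> nat) \<Rightarrow> (nat \<Rightarrow> 'a::field poly) \<Rightarrow> (nat \<Rightarrow> 'a poly) \<Rightarrow> 'a poly" where
  "scal m l u v =
    (let L = Lcm {l i | i. i < m \<and> u i \<noteq> 0 \<and> v i \<noteq> 0}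
     in (\<Sum>i<m. u i * hat (l i) (v i) * (\<Sum>k<L div l i. monom 1 (k * l i))) mod tpm1 L)"

end

theory Submission
  imports Defs
begin


definition cyc :: "nat \<Rightarrow> 'a::field poly \<Rightarrow> int \<Rightarrow> 'a" where
  "cyc L p x = coeff p (nat (x mod int L))"

lemma cyc_mod[simp]: "cyc L p (x mod int L) = cyc L p x"
  by (simp add: cyc_def)

lemma shift_sum:
  fixes F :: "int \<Rightarrow> 'b::comm_monoid_add"
  assumes L: "0 < L" and per: "\<And>x. F (x mod int L) = F x"
  shows "(\<Sum>a<L. F (int a + k)) = (\<Sum>a<L. F (int a))"
proof (rule sum.reindex_bij_witness[where i="\<lambda>b. nat ((int b - k) mod int L)" and j="\<lambda>a. nat ((int a + k) mod int L)"])
  fix a assume a: "a \<in> {..<L}"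
  have "((int a + k) mod int L - k) mod int L = (int a + k - k) mod int L"
    by (rule mod_diff_left_eq)
  then have "((int a + k) mod int L - k) mod int L = int a mod int L" by simp
  also have "\<dots> = int a" using a by simp
  finally show "nat ((int (nat ((int a + k) mod int L)) - k) mod int L) = a"
    using L by simp
  show "nat ((int a + k) mod int L) \<in> {..<L}" using L
    by (simp add: nat_less_iff)
  show "F (int (nat ((int a + k) mod int L))) = F (int a + k)"
    using L per by simp
next
  fix b assume b: "b \<in> {..<L}"
  show "nat ((int b - k) mod int L) \<in> {..<L}" using L by (simp add: nat_less_iff)
  have "((int b - k) mod int L + k) mod int L = int b mod int L"
  proof -
    have "((int b - k) mod int L + k) mod int L = (int b - k + k) mod int L" by (rule mod_add_left_eq)
    then show ?thesis by simp
  qed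
  also have "\<dots> = int b" using b by simp
  finally show "nat ((int (nat ((int b - k) mod int L)) + k) mod int L) = b"
    using L by simp
qed

lemma tpm1_dvd_mult: "tpm1 L dvd (tpm1 (L * q) :: 'a::field poly)"
proof -
  have "tpm1 (L*q) = (monom (1::'a) L)^q - 1" by (simp add: tpm1_def monom_power)
  also have "\<dots> = (monom 1 L - 1) * (\<Sum>i<q. (monom 1 L)^i)" by (rule power_diff_1_eq)
  finally show ?thesis by (simp add: tpm1_def)
qed

lemma tpm1_factor: "tpm1 (L * q) = (tpm1 L :: 'a::field poly) * (\<Sum>k<q. monom 1 (k * L))"
proof -
  have "tpm1 (L*q) = (monom (1::'a) L)^q - 1" by (simp add: tpm1_def monom_power)
  also have "\<dots> = (monom 1 L - 1) * (\<Sum>i<q. (monom 1 L)^i)" by (rule power_diff_1_eq)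
  finally show ?thesis by (simp add: tpm1_def monom_power mult.commute)
qed

lemma monom_mod_cong: "(tpm1 L :: 'a::field poly) dvd monom c k - monom c (k mod L)"
proof -
  have "monom c k - monom c (k mod L) = monom c (k mod L) * tpm1 (L * (k div L))"
    by (simp add: tpm1_def mult_monom algebra_simps)
  then show ?thesis using tpm1_dvd_mult by (metis dvd_mult)
qed

lemma degree_tpm1: "0 < L \<Longrightarrow> degree (tpm1 L :: 'a::field poly) = L"
proof -
  assume L: "0 < L"
  have "degree (monom (1::'a) L + (- 1)) = L"
    using L by (subst degree_add_eq_left) (auto simp: degree_monom_eq)
  then show ?thesis by (simp add: tpm1_def)
qed

lemma tpm1_nz: assumes L: "0 < L" shows "(tpm1 L :: 'a::field poly) \<noteq> 0"
proof
  assume "tpm1 L = (0::'a poly)"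
  then have "degree (tpm1 L :: 'a poly) = 0" by simp
  with degree_tpm1[OF L, where 'a='a] L show False by simp
qed

lemma mod_tpm1_eq:
  fixes p r :: "'a::field poly"
  assumes "0 < L" "degree r < L \<or> r = 0" "tpm1 L dvd p - r"
  shows "p mod tpm1 L = r"
proof -
  have "r mod tpm1 L = r" using assms(1,2) by (auto intro: mod_poly_less simp: degree_tpm1)
  moreover have "p mod tpm1 L = r mod tpm1 L" using assms(3) by (simp add: mod_eq_dvd_iff)
  ultimately show ?thesis by simp
qed


lemma sum_monoms:
  assumes "\<And>a. a \<ge> L \<Longrightarrow> coeff p a = 0"
  shows "p = (\<Sum>a<L. monom (coeff p a) a)"
proof (rule poly_eqI)
  fix n
  have "coeff (\<Sum>a<L. monom (coeff p a) a) n = (\<Sum>a<L. if a = n then coeff p a else 0)"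
    by (simp add: coeff_sum coeff_monom)
  also have "\<dots> = coeff p n" using assms[of n] by (cases "n < L") (simp_all add: sum.delta)
  finally show "coeff p n = coeff (\<Sum>a<L. monom (coeff p a) a) n" by (rule sym)
qed

lemma cyc_nat: "a < L \<Longrightarrow> cyc L p (int a) = coeff p a"
  by (simp add: cyc_def)

lemma hat_eq: assumes "0 < L"
  shows "hat L v = (\<Sum>b<L. monom (cyc L v (- int b)) b)"
  unfolding hat_def
proof (rule sum.cong[OF refl])
  fix b assume "b \<in> {..<L}"
  then have b: "b < L" by simp
  have "int (L - b) = int L - int b" using b by linarith
  then have "int ((L - b) mod L) = (int L - int b) mod int L"
    by (metis of_nat_mod)
  also have "\<dots> = (- int b) mod int L" by (simp add: mod_diff_left_eq[symmetric])
  finally have "(L - b) mod L = nat ((- int b) mod int L)" by linarith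
  then show "monom (coeff v ((L - b) mod L)) b = monom (cyc L v (- int b)) b"
    by (simp add: cyc_def)
qed

definition cf :: "nat \<Rightarrow> 'a::field poly \<Rightarrow> 'a poly \<Rightarrow> nat \<Rightarrow> 'a" where
  "cf L u v r = (\<Sum>a<L. coeff u a * cyc L v (int a - int r))"

lemma key_cong:
  fixes u v :: "'a::field poly"
  assumes L: "0 < L" and u: "\<And>a. a \<ge> L \<Longrightarrow> coeff u a = 0"
  shows "tpm1 L dvd u * hat L v - (\<Sum>r<L. monom (cf L u v r) r)"
proof -
  have "u * hat L v = (\<Sum>a<L. monom (coeff u a) a) * (\<Sum>b<L. monom (cyc L v (- int b)) b)"
  proof -
    have hu: "(\<Sum>a<L. monom (coeff u a) a) = u" using sum_monoms[OF u] by (rule sym)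
    show ?thesis by (simp only: hu hat_eq[OF L])
  qed
  also have "\<dots> = (\<Sum>a<L. \<Sum>b<L. monom (coeff u a * cyc L v (- int b)) (a + b))"
    by (simp add: sum_product mult_monom)
  finally have e1: "u * hat L v = \<dots>" .
  have d: "tpm1 L dvd (\<Sum>a<L. \<Sum>b<L. monom (coeff u a * cyc L v (- int b)) (a + b))
        - (\<Sum>a<L. \<Sum>b<L. monom (coeff u a * cyc L v (- int b)) ((a + b) mod L))"
    unfolding sum_subtractf[symmetric] by (intro dvd_sum monom_mod_cong)
  have e2: "(\<Sum>b<L. monom (coeff u a * cyc L v (- int b)) ((a + b) mod L))
      = (\<Sum>r<L. monom (coeff u a * cyc L v (int a - int r)) r)" for a
  proof -
    define F where "F x = monom (coeff u a * cyc L v (int a - x)) (nat (x mod int L))" for x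
    have per: "F (x mod int L) = F x" for x
    proof -
      have "cyc L v (int a - x mod int L) = cyc L v (int a - x)"
        by (metis cyc_mod mod_diff_right_eq)
      then show ?thesis by (simp add: F_def)
    qed
    have "(\<Sum>b<L. F (int b + int a)) = (\<Sum>b<L. F (int b))" by (rule shift_sum[where F=F, OF L per])
    moreover have "F (int b + int a) = monom (coeff u a * cyc L v (- int b)) ((a + b) mod L)" for b
      by (simp add: F_def nat_mod_as_int add.commute)
    moreover have "F (int r) = monom (coeff u a * cyc L v (int a - int r)) r" if "r < L" for r
      using that by (simp add: F_def)
    ultimately show ?thesis by simp
  qed
  have e3: "(\<Sum>a<L. \<Sum>r<L. monom (coeff u a * cyc L v (int a - int r)) r) = (\<Sum>r<L. monom (cf L u v r) r)"
    by (subst sum.swap) (simp add: cf_def monom_sum)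
  have d2: "tpm1 L dvd (\<Sum>a<L. \<Sum>b<L. monom (coeff u a * cyc L v (- int b)) (a + b))
        - (\<Sum>a<L. \<Sum>r<L. monom (coeff u a * cyc L v (int a - int r)) r)"
    using d by (simp only: e2)
  then show ?thesis by (simp only: e1 e3)
qed

lemma prod_coeff:
  assumes l: "0 < l"
  shows "coeff ((\<Sum>r<l. monom (c r) r) * (\<Sum>k<q. monom 1 (k * l))) n = (if n < l * q then c (n mod l) else (0::'a::field))"
proof -
  have "(\<Sum>r<l. monom (c r) r) * (\<Sum>k<q. monom 1 (k * l)) = (\<Sum>r<l. \<Sum>k<q. monom (c r) (r + k * l))"
    by (simp add: sum_product mult_monom)
  then have "coeff ((\<Sum>r<l. monom (c r) r) * (\<Sum>k<q. monom 1 (k * l))) n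
     = (\<Sum>r<l. \<Sum>k<q. if r + k * l = n then c r else 0)"
    by (simp add: coeff_sum coeff_monom)
  also have "\<dots> = (\<Sum>r<l. if r = n mod l then (\<Sum>k<q. if k = n div l then c r else 0) else 0)"
  proof (rule sum.cong[OF refl])
    fix r assume "r \<in> {..<l}"
    then have r: "r < l" by simp
    have iff: "(r + k * l = n) \<longleftrightarrow> (r = n mod l \<and> k = n div l)" for k
    proof
      assume "r + k * l = n" then show "r = n mod l \<and> k = n div l" using r l by auto
    next
      assume "r = n mod l \<and> k = n div l" then show "r + k * l = n" by simp
    qed
    show "(\<Sum>k<q. if r + k * l = n then c r else 0) = (if r = n mod l then (\<Sum>k<q. if k = n div l then c r else 0) else 0)"
      by (simp add: iff)
  qed
  also have "\<dots> = (if n div l < q then c (n mod l) else 0)"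
    using l by (simp add: sum.delta)
  also have "(n div l < q) = (n < l * q)" using l
    by (simp add: div_less_iff_less_mult mult.commute)
  finally show ?thesis .
qed


lemma cyc_cong: "x mod int L = y mod int L \<Longrightarrow> cyc L p x = cyc L p y"
  by (simp add: cyc_def)

lemma M_coeff: "u \<in> M_space m l \<Longrightarrow> i < m \<Longrightarrow> a \<ge> l i \<Longrightarrow> coeff (u i) a = 0"
  unfolding M_space_def by (cases "u i = 0") (auto intro!: coeff_eq_0)

lemma loc_shift_coeff:
  fixes u :: "nat \<Rightarrow> 'a::field poly"
  assumes i: "i < m" and L: "0 < l i" and p: "\<And>a. a \<ge> l i \<Longrightarrow> coeff (u i) a = 0"
    and b: "b < l i"
  shows "coeff (loc_shift m l u i) b = cyc (l i) (u i) (int b - 1)"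
proof -
  define p where "p = u i"
  define c where "c = coeff p (l i - 1)"
  define R where "R = monom 1 1 * (p - monom c (l i - 1)) + monom c 0"
  have cR: "coeff R k = (if k = 0 then c else if k \<le> l i - 1 then coeff p (k - 1) else 0)" for k
  proof -
    have "coeff R k = (if 1 \<le> k then coeff p (k - 1) - (if l i - 1 = k - 1 then c else 0) else 0)
        + (if k = 0 then c else 0)"
      by (simp add: R_def coeff_monom_mult coeff_monom)
    then show ?thesis using p[of "k - 1"] L unfolding p_def[symmetric] c_def
      by (auto split: if_splits)
  qed
  have dR: "degree R < l i \<or> R = 0"
  proof -
    have "degree R \<le> l i - 1" by (rule degree_le) (auto simp: cR)
    then show ?thesis using L by auto
  qed
  have "monom 1 1 * p - R = monom c (l i) - monom c 0"
    using L by (simp add: R_def algebra_simps mult_monom)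
  also have "\<dots> = smult c (tpm1 (l i))"
  proof -
    have "smult c (tpm1 (l i)) = smult c (monom 1 (l i)) - smult c 1" by (simp add: tpm1_def smult_diff_right)
    also have "\<dots> = monom c (l i) - monom c 0" by (simp only: smult_monom mult_1_right smult_one monom_0)
    finally show ?thesis by (rule sym)
  qed
  finally have "tpm1 (l i) dvd monom 1 1 * p - R" by (simp add: dvd_smult)
  then have "(monom 1 1 * p) mod tpm1 (l i) = R" using mod_tpm1_eq[OF L dR] by blast
  then have "coeff (loc_shift m l u i) b = coeff R b" using i by (simp add: loc_shift_def p_def)
  also have "\<dots> = cyc (l i) (u i) (int b - 1)"
  proof (cases "b = 0")
    case True
    have "(-1::int) mod int (l i) = int (l i - 1)" using L
      by (simp add: zmod_minus1 of_nat_diff)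
    then show ?thesis using True by (simp add: cR c_def p_def cyc_def)
  next
    case False
    have e: "(int b - 1) mod int (l i) = int (b - 1)" using False b
      by (subst mod_pos_pos_trivial) auto
    have "b \<le> l i - 1" using b by arith
    moreover have e2: "nat (int b - 1) = b - 1" using False by (simp add: nat_diff_distrib)
    ultimately show ?thesis using False by (simp add: cR p_def cyc_def e)
  qed
  finally show ?thesis .
qed

lemma loc_shift_M: "(\<forall>i<m. 0 < l i) \<Longrightarrow> loc_shift m l u \<in> M_space m l"
proof -
  assume pos: "\<forall>i<m. 0 < l i"
  have "(monom 1 1 * u i) mod tpm1 (l i) = 0 \<or> degree ((monom 1 1 * u i) mod tpm1 (l i)) < l i" if "i < m" for i
  proof -
    have L: "0 < l i" using pos that by auto
    have "tpm1 (l i) \<noteq> (0::'a poly)" by (rule tpm1_nz[OF L])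
    from degree_mod_less[OF this, of "monom 1 1 * u i"] degree_tpm1[OF L, where 'a='a] show ?thesis by auto
  qed
  then show ?thesis unfolding M_space_def loc_shift_def by auto
qed

lemma shift_pow:
  fixes u :: "nat \<Rightarrow> 'a::field poly"
  assumes pos: "\<forall>i<m. 0 < l i" and uM: "u \<in> M_space m l" and i: "i < m" and b: "b < l i"
  shows "coeff ((loc_shift m l ^^ s) u i) b = cyc (l i) (u i) (int b - int s)"
  using b
proof (induction s arbitrary: b)
  case 0
  then show ?case by (simp add: cyc_nat)
next
  case (Suc s)
  define w where "w = (loc_shift m l ^^ s) u"
  have wM: "w \<in> M_space m l"
  proof (cases s)
    case 0 then show ?thesis using uM by (simp add: w_def)
  next
    case (Suc s') then show ?thesis using loc_shift_M[OF pos] by (simp add: w_def)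
  qed
  have L: "0 < l i" using pos i by auto
  have "coeff ((loc_shift m l ^^ Suc s) u i) b = coeff (loc_shift m l w i) b" by (simp add: w_def)
  also have "\<dots> = cyc (l i) (w i) (int b - 1)"
    by (rule loc_shift_coeff[where u=w and i=i and m=m and l=l, OF i L M_coeff[OF wM i] Suc.prems])
  also have "\<dots> = coeff (w i) (nat ((int b - 1) mod int (l i)))" by (simp add: cyc_def)
  also have "\<dots> = cyc (l i) (u i) (int (nat ((int b - 1) mod int (l i))) - int s)"
    unfolding w_def by (rule Suc.IH) (use L in \<open>simp add: nat_less_iff\<close>)
  also have "\<dots> = cyc (l i) (u i) (int b - int (Suc s))"
    using L by (intro cyc_cong) (simp add: mod_diff_left_eq algebra_simps)
  finally show ?case .
qed


lemma hat_zero[simp]: "hat L 0 = 0" by (simp add: hat_def)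
lemma cyc_zero[simp]: "cyc L 0 x = 0" by (simp add: cyc_def)

lemma scal_zero_crit:
  fixes u v :: "nat \<Rightarrow> 'a::field poly"
  assumes pos: "\<forall>i<m. 0 < l i" and uM: "u \<in> M_space m l" and vM: "v \<in> M_space m l"
    and crit: "\<And>n. (\<Sum>i<m. cf (l i) (u i) (v i) (n mod l i)) = 0"
  shows "scal m l u v = 0"
proof -
  define A where "A = {l i | i. i < m \<and> u i \<noteq> 0 \<and> v i \<noteq> 0}"
  define L where "L = Lcm A"
  have finA: "finite A" unfolding A_def by (rule finite_subset[of _ "l ` {..<m}"]) auto
  have "0 \<notin> A" using pos unfolding A_def by auto
  then have L0: "0 < L" using Lcm_0_iff[OF finA] unfolding L_def by auto
  define S where "S i = (\<Sum>k<L div l i. monom (1::'a) (k * l i))" for i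
  define R where "R i = (\<Sum>r<l i. monom (cf (l i) (u i) (v i) r) r)" for i
  have scal_eq: "scal m l u v = (\<Sum>i<m. u i * hat (l i) (v i) * S i) mod tpm1 L"
    unfolding scal_def Let_def A_def[symmetric] L_def[symmetric] S_def by simp
  have zero_case: "R i = 0 \<and> u i * hat (l i) (v i) = 0" if "u i = 0 \<or> v i = 0" for i
    using that by (auto simp: R_def cf_def)
  have dv: "tpm1 L dvd (\<Sum>i<m. u i * hat (l i) (v i) * S i) - (\<Sum>i<m. R i * S i)"
    unfolding sum_subtractf[symmetric]
  proof (rule dvd_sum)
    fix i assume "i \<in> {..<m}"
    then have i: "i < m" by simp
    show "tpm1 L dvd u i * hat (l i) (v i) * S i - R i * S i"
    proof (cases "u i = 0 \<or> v i = 0")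
      case True then show ?thesis using zero_case[OF True] by auto
    next
      case False
      then have "l i \<in> A" unfolding A_def using i by auto
      then have "l i dvd L" unfolding L_def by (rule dvd_Lcm)
      then have Leq: "L = l i * (L div l i)" by simp
      have "tpm1 L = tpm1 (l i) * S i" unfolding S_def by (subst Leq, rule tpm1_factor)
      moreover have "tpm1 (l i) dvd u i * hat (l i) (v i) - R i"
        unfolding R_def using pos i by (intro key_cong M_coeff[OF uM i]) auto
      ultimately show ?thesis by (simp add: left_diff_distrib[symmetric] mult_dvd_mono)
    qed
  qed
  have Y0: "(\<Sum>i<m. R i * S i) = 0"
  proof (rule poly_eqI)
    fix n
    have ci: "coeff (R i * S i) n = (if n < L then cf (l i) (u i) (v i) (n mod l i) else 0)" if i: "i < m" for i
    proof (cases "u i = 0 \<or> v i = 0")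
      case True then show ?thesis using zero_case[OF True] by (auto simp: cf_def)
    next
      case False
      then have "l i \<in> A" unfolding A_def using i by auto
      then have "l i dvd L" unfolding L_def by (rule dvd_Lcm)
      then have Leq: "l i * (L div l i) = L" by simp
      show ?thesis unfolding R_def S_def using prod_coeff[of "l i" "\<lambda>r. cf (l i) (u i) (v i) r" "L div l i" n] pos i Leq
        by auto
    qed
    have "coeff (\<Sum>i<m. R i * S i) n = (\<Sum>i<m. if n < L then cf (l i) (u i) (v i) (n mod l i) else 0)"
      by (simp add: coeff_sum ci)
    also have "\<dots> = 0" using crit[of n] by (cases "n < L") simp_all
    finally show "coeff (\<Sum>i<m. R i * S i) n = coeff 0 n" by (simp only: coeff_0)
  qed
  have "(\<Sum>i<m. u i * hat (l i) (v i) * S i) mod tpm1 L = 0"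
  proof -
    have "tpm1 L dvd (\<Sum>i<m. u i * hat (l i) (v i) * S i)" using dv unfolding Y0 diff_zero .
    then show ?thesis by (rule dvd_imp_mod_0)
  qed
  then show ?thesis by (simp only: scal_eq)
qed

lemma cf_mod: "0 < L \<Longrightarrow> cf L p q (n mod L) = (\<Sum>a<L. coeff p a * cyc L q (int a - int n))"
  unfolding cf_def
  by (intro sum.cong refl arg_cong2[where f="(*)"] cyc_cong) (simp add: of_nat_mod mod_diff_right_eq)

lemma std_bil_shift_zero:
  assumes "GQC m l n C" "u \<in> C" "v \<in> dual_code m l C"
  shows "std_bil m l ((loc_shift m l ^^ s) u) v = 0"
proof -
  have "(loc_shift m l ^^ s) u \<in> C"
    using assms(1,2) by (induction s) (auto simp: GQC_def)
  then show ?thesis using assms(3) unfolding dual_code_def by auto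
qed

lemma scal_dual_first:
  fixes u v :: "nat \<Rightarrow> 'a::field poly"
  assumes G: "GQC m l n C" and u: "u \<in> C" and v: "v \<in> dual_code m l C"
  shows "scal m l v u = 0"
proof -
  have pos: "\<forall>i<m. 0 < l i" using G by (simp add: GQC_def orbit_lengths_def)
  have uM: "u \<in> M_space m l" using G u by (auto simp: GQC_def linear_code_def)
  have vM: "v \<in> M_space m l" using v by (simp add: dual_code_def)
  show ?thesis
  proof (rule scal_zero_crit[OF pos vM uM])
    fix k
    have "(\<Sum>i<m. cf (l i) (v i) (u i) (k mod l i))
        = (\<Sum>i<m. \<Sum>a<l i. coeff ((loc_shift m l ^^ k) u i) a * coeff (v i) a)"
    proof (rule sum.cong[OF refl])
      fix i assume "i \<in> {..<m}"
      then have i: "i < m" by simp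
      then have L: "0 < l i" using pos by auto
      show "cf (l i) (v i) (u i) (k mod l i) = (\<Sum>a<l i. coeff ((loc_shift m l ^^ k) u i) a * coeff (v i) a)"
        unfolding cf_mod[OF L]
        by (intro sum.cong refl) (simp add: shift_pow[OF pos uM i] mult.commute)
    qed
    also have "\<dots> = 0" using std_bil_shift_zero[OF G u v, of k] by (simp add: std_bil_def)
    finally show "(\<Sum>i<m. cf (l i) (v i) (u i) (k mod l i)) = 0" .
  qed
qed

lemma scal_code_first:
  fixes u v :: "nat \<Rightarrow> 'a::field poly"
  assumes G: "GQC m l n C" and u: "u \<in> C" and v: "v \<in> dual_code m l C"
  shows "scal m l u v = 0"
proof -
  have pos: "\<forall>i<m. 0 < l i" using G by (simp add: GQC_def orbit_lengths_def)
  have uM: "u \<in> M_space m l" using G u by (auto simp: GQC_def linear_code_def)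
  have vM: "v \<in> M_space m l" using v by (simp add: dual_code_def)
  define P where "P = (\<Prod>i<m. l i)"
  have P0: "0 < P" unfolding P_def using pos by (simp add: prod_pos)
  have dP: "l i dvd P" if "i < m" for i unfolding P_def using that by (intro dvd_prodI) auto
  show ?thesis
  proof (rule scal_zero_crit[OF pos uM vM])
    fix k
    define s where "s = k * (P - 1)"
    have "(\<Sum>i<m. cf (l i) (u i) (v i) (k mod l i))
        = (\<Sum>i<m. \<Sum>a<l i. coeff ((loc_shift m l ^^ s) u i) a * coeff (v i) a)"
    proof (rule sum.cong[OF refl])
      fix i assume "i \<in> {..<m}"
      then have i: "i < m" by simp
      then have L: "0 < l i" using pos by auto
      define F where "F x = cyc (l i) (u i) x * cyc (l i) (v i) (x - int k)" for x
      have per: "F (x mod int (l i)) = F x" for x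
        unfolding F_def by (intro arg_cong2[where f="(*)"] cyc_cong) (simp_all add: mod_diff_left_eq)
      have "cf (l i) (u i) (v i) (k mod l i) = (\<Sum>a<l i. F (int a))"
        unfolding cf_mod[OF L] F_def by (intro sum.cong refl) (simp add: cyc_nat)
      also have "\<dots> = (\<Sum>a<l i. F (int a + int k))" by (rule shift_sum[where F=F, OF L per, symmetric])
      also have "\<dots> = (\<Sum>a<l i. coeff ((loc_shift m l ^^ s) u i) a * coeff (v i) a)"
      proof (intro sum.cong refl)
        fix a assume "a \<in> {..<l i}"
        then have a: "a < l i" by simp
        have "(int a + int k) mod int (l i) = (int a - int s) mod int (l i)"
        proof -
          have "int s = int k * int P - int k" unfolding s_def using P0 by (simp add: of_nat_diff algebra_simps)
          then have "(int a + int k) - (int a - int s) = int k * int P" by simp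
          moreover have "int (l i) dvd int k * int P" using dP[OF i] by simp
          ultimately show ?thesis by (simp add: mod_eq_dvd_iff)
        qed
        then have cc: "cyc (l i) (u i) (int a + int k) = cyc (l i) (u i) (int a - int s)" by (rule cyc_cong)
        show "F (int a + int k) = coeff ((loc_shift m l ^^ s) u i) a * coeff (v i) a"
          unfolding F_def using a by (simp add: shift_pow[OF pos uM i a] cyc_nat cc)
      qed
      finally show "cf (l i) (u i) (v i) (k mod l i) = (\<Sum>a<l i. coeff ((loc_shift m l ^^ s) u i) a * coeff (v i) a)" .
    qed
    also have "\<dots> = 0" using std_bil_shift_zero[OF G u v, of s] by (simp add: std_bil_def)
    finally show "(\<Sum>i<m. cf (l i) (u i) (v i) (k mod l i)) = 0" .
  qed
qed


theorem theorem1: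
  fixes C :: "(nat \<Rightarrow> 'a::{finite,field} poly) set"
    and m n :: nat and l :: "nat \<Rightarrow> nat"
    and mord :: "nat \<times> nat \<Rightarrow> nat \<times> nat \<Rightarrow> bool"
    and g h :: "nat \<Rightarrow> nat \<Rightarrow> 'a poly"
    and i j :: nat
  assumes "GQC m l n C"
    and "monomial_order m mord"
    and "groebner_basis m mord (g ` {..<m}) (lift_code m l C)"
    and "groebner_basis m mord (h ` {..<m}) (lift_code m l (dual_code m l C))"
    and "i < m" and "j < m"
  shows "scal m l (proj m l (g i)) (proj m l (h j)) = 0
       \<and> scal m l (proj m l (h j)) (proj m l (g i)) = 0"
proof -
  have u: "proj m l (g i) \<in> C" using assms(3,5) unfolding groebner_basis_def lift_code_def by auto
  have v: "proj m l (h j) \<in> dual_code m l C" using assms(4,6) unfolding groebner_basis_def lift_code_def by auto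
  show ?thesis using scal_code_first[OF assms(1) u v] scal_dual_first[OF assms(1) u v] by simp
qed

end
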